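(* For every integer $n\ge 3$, if $T$ is a standard Young tableau of shape $(n,n)$ chosen uniformly at random, then $$SP\big((n,n),[1,3],[2,1]\big)=\Pr(T_{1,3}>T_{2,1})-\Pr(T_{2,1}>T_{1,3})=\frac{3}{2n-1}=\frac{3}{2}\cdot\frac1n+\frac34\cdot\frac1{n^2}+\frac38\cdot\frac1{n^3}+O\!\left(\frac1{n^4}\right).$$ Consequently, the minimum over all pairs of cells $c_1,c_2$ of the shape $(n,n)$ of $|SP((n,n),c_1,c_2)|$ is $O(1/n)$ as $n\to\infty$.
   Context: A partition (shape) $\lambda=(\lambda_1,\dots,\lambda_k)$ with $\lambda_1\ge\dots\ge\lambda_k>0$ is identified with its Young diagram, the set of cells $[i,j]$ with $1\le i\le k$ and $1\le j\le\lambda_i$ (row $i$, column $j$). A standard Young tableau of shape $\lambda$ with $N=\sum\lambda_i$ cells is a bijective filling $T$ of the cells by $\{1,\dots,N\}$ with $T_{i,j}<T_{i,j+1}$ and $T_{i,j}<T_{i+1,j}$ whenever these cells exist. For cells $c_1,c_2$ of $\lambda$, the sorting probability is $SP(\lambda,c_1,c_2)=\Pr(T_{c_1}>T_{c_2})-\Pr(T_{c_2}>T_{c_1})=2\Pr(T_{c_1}>T_{c_2})-1$, where $T$ is uniformly random among standard Young tableaux of shape $\lambda$. *)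

theory Defs
  imports Complex_Main "HOL-Library.Landau_Symbols"
begin

text \<open>A partition is a list of positive parts in weakly decreasing order; its Young
diagram is the set of cells (i,j) with 1 \<le> i \<le> number of parts and 1 \<le> j \<le> lambda_i
(rows and columns are 1-indexed).\<close>

definition young_diagram :: "nat list \<Rightarrow> (nat \<times> nat) set" where
  "young_diagram lam = {(i, j). 1 \<le> i \<and> i \<le> length lam \<and> 1 \<le> j \<and> j \<le> lam ! (i - 1)}"

text \<open>Standard Young tableaux of shape lam, represented as functions on cells,
with value 0 outside the diagram (to make the set of tableaux finite).\<close>

definition SYT :: "nat list \<Rightarrow> ((nat \<times> nat) \<Rightarrow> nat) set" where
  "SYT lam = {T. bij_betw T (young_diagram lam) {1..sum_list lam}
              \<and> (\<forall>c. c \<notin> young_diagram lam \<longrightarrow> T c = 0)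
              \<and> (\<forall>i j. (i, j) \<in> young_diagram lam \<and> (i, j + 1) \<in> young_diagram lam
                        \<longrightarrow> T (i, j) < T (i, j + 1))
              \<and> (\<forall>i j. (i, j) \<in> young_diagram lam \<and> (i + 1, j) \<in> young_diagram lam
                        \<longrightarrow> T (i, j) < T (i + 1, j))}"

definition SP :: "nat list \<Rightarrow> nat \<times> nat \<Rightarrow> nat \<times> nat \<Rightarrow> real" where
  "SP lam c1 c2 =
     (real (card {T \<in> SYT lam. T c1 > T c2}) - real (card {T \<in> SYT lam. T c2 > T c1}))
     / real (card (SYT lam))"

end

theory Submission
  imports Defs
begin


lemma yd2: "(i, j) \<in> young_diagram [a, b] \<longleftrightarrow> (i = 1 \<and> 1 \<le> j \<and> j \<le> a) \<or> (i = 2 \<and> 1 \<le> j \<and> j \<le> b)"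
  unfolding young_diagram_def by (auto simp: nth_Cons' split: if_splits)

lemma yd2_fin: "finite (young_diagram [a, b])"
proof -
  have "young_diagram [a, b] \<subseteq> {1..2} \<times> {1..max a b}" by (auto simp: yd2)
  then show ?thesis by (rule finite_subset) auto
qed

lemma SYT2: "T \<in> SYT [a, b] \<longleftrightarrow> bij_betw T (young_diagram [a, b]) {1..a+b}
   \<and> (\<forall>c. c \<notin> young_diagram [a, b] \<longrightarrow> T c = 0)
   \<and> (\<forall>i j. (i, j) \<in> young_diagram [a, b] \<and> (i, j + 1) \<in> young_diagram [a, b] \<longrightarrow> T (i, j) < T (i, j + 1))
   \<and> (\<forall>i j. (i, j) \<in> young_diagram [a, b] \<and> (i + 1, j) \<in> young_diagram [a, b] \<longrightarrow> T (i, j) < T (i + 1, j))"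
  unfolding SYT_def by simp

lemma SYT_val: "T \<in> SYT [a, b] \<Longrightarrow> c \<in> young_diagram [a, b] \<Longrightarrow> T c \<in> {1..a+b}"
  unfolding SYT2 bij_betw_def by blast

lemma SYT_zero: "S \<in> SYT lam \<Longrightarrow> c \<notin> young_diagram lam \<Longrightarrow> S c = 0"
  unfolding SYT_def by blast

lemma SYT_fin: "finite (SYT [a, b])"
proof -
  have "SYT [a, b] \<subseteq> {f. \<forall>x. (x \<in> young_diagram [a,b] \<longrightarrow> f x \<in> {1..a+b}) \<and> (x \<notin> young_diagram [a,b] \<longrightarrow> f x = 0)}"
    using SYT_val by (auto simp: SYT2)
  then show ?thesis by (rule finite_subset) (intro finite_set_of_finite_funs yd2_fin, simp)
qed

lemma SYT_corner:
  assumes T: "T \<in> SYT [a, b]" and ba: "b \<le> a" and N: "1 \<le> a + b"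
  shows "(b < a \<and> T (1, a) = a + b) \<or> (1 \<le> b \<and> T (2, b) = a + b)"
proof -
  from T have bij: "bij_betw T (young_diagram [a, b]) {1..a+b}" by (simp add: SYT2)
  then obtain c where c: "c \<in> young_diagram [a, b]" "T c = a + b"
    using N by (metis atLeastAtMost_iff bij_betw_iff_bijections order_refl)
  obtain i j where ij: "c = (i, j)" by force
  have nr: "(i, j + 1) \<notin> young_diagram [a, b]"
  proof
    assume h: "(i, j + 1) \<in> young_diagram [a, b]"
    then have "T (i, j) < T (i, j+1)" using T c ij unfolding SYT2 by blast
    moreover have "T (i, j+1) \<le> a + b" using SYT_val[OF T h] by simp
    ultimately show False using c ij by simp
  qed
  have nc: "(i + 1, j) \<notin> young_diagram [a, b]"
  proof
    assume h: "(i + 1, j) \<in> young_diagram [a, b]"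
    then have "T (i, j) < T (i+1, j)" using T c ij unfolding SYT2 by blast
    moreover have "T (i+1, j) \<le> a + b" using SYT_val[OF T h] by simp
    ultimately show False using c ij by simp
  qed
  have "(i=1 \<and> 1\<le>j \<and> j\<le>a \<or> i=2 \<and> 1\<le>j \<and> j\<le>b) \<and> \<not>(i=1 \<and> 1\<le>j+1 \<and> j+1\<le>a \<or> i=2 \<and> 1\<le>j+1 \<and> j+1\<le>b)
    \<and> \<not>(i+1=1 \<and> 1\<le>j \<and> j\<le>a \<or> i+1=2 \<and> 1\<le>j \<and> j\<le>b)"
    using c(1)[unfolded ij] nr nc unfolding yd2 by blast
  then have "(i=1 \<and> j=a \<and> b<a) \<or> (i=2 \<and> j=b \<and> 1\<le>b)" using ba by auto
  then show ?thesis using c ij by auto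
qed


lemma bij_ext: assumes "bij_betw S A {1..N}" "c \<notin> A"
  shows "bij_betw (S(c:=Suc N)) (A \<union> {c}) {1..Suc N}"
proof -
  have "bij_betw (S(c:=Suc N)) A {1..N}" using assms
    by (smt (verit, best) bij_betw_cong fun_upd_other)
  from notIn_Un_bij_betw[OF assms(2) _ this] have "bij_betw (S(c:=Suc N)) (A \<union> {c}) ({1..N} \<union> {Suc N})" by simp
  moreover have "{1..N} \<union> {Suc N} = {1..Suc N}" by auto
  ultimately show ?thesis by simp
qed

lemma bij_restr: assumes "bij_betw T A {1..Suc N}" "c \<in> A" "T c = Suc N"
  shows "bij_betw (T(c:=0)) (A - {c}) {1..N}"
proof -
  have e1: "(A - {c}) \<union> {c} = A" using assms by auto
  have e2: "{1..N} \<union> {T c} = {1..Suc N}" using assms by auto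
  have "bij_betw T (A - {c}) {1..N}"
    using notIn_Un_bij_betw3[of c "A - {c}" T "{1..N}"] assms e1 e2 by simp
  then show ?thesis by (smt (verit, best) bij_betw_cong fun_upd_other Diff_iff singletonI)
qed

lemma yd_row1: "young_diagram [Suc a, b] = young_diagram [a, b] \<union> {(1, Suc a)}"
  by (auto simp: yd2)

lemma yd_row2: "young_diagram [a, Suc b] = young_diagram [a, b] \<union> {(2, Suc b)}"
  by (auto simp: yd2)

lemma E1: assumes S: "S \<in> SYT [a, b]" and ba: "b \<le> a"
  shows "S((1, Suc a) := Suc (a + b)) \<in> SYT [Suc a, b]"
proof -
  let ?c = "(1::nat, Suc a)"
  have cn: "?c \<notin> young_diagram [a, b]" by (simp add: yd2)
  have bij: "bij_betw S (young_diagram [a, b]) {1..a+b}" using S by (simp add: SYT2)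
  have B: "bij_betw (S(?c := Suc (a + b))) (young_diagram [Suc a, b]) {1..Suc a + b}"
    using bij_ext[OF bij cn] by (simp add: yd_row1)
  show ?thesis unfolding SYT2
  proof (intro conjI allI impI)
    show "bij_betw (S(?c := Suc (a + b))) (young_diagram [Suc a, b]) {1..Suc a + b}" by (rule B)
  next
    fix c assume "c \<notin> young_diagram [Suc a, b]"
    then show "(S(?c := Suc (a + b))) c = 0" using SYT_zero[OF S, of c] by (auto simp: yd_row1)
  next
    fix i j assume h: "(i, j) \<in> young_diagram [Suc a, b] \<and> (i, j + 1) \<in> young_diagram [Suc a, b]"
    show "(S(?c := Suc (a + b))) (i, j) < (S(?c := Suc (a + b))) (i, j + 1)"
    proof (cases "(i, j + 1) = ?c")
      case True
      then have "(i, j) \<in> young_diagram [a, b]" using h by (auto simp: yd2)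
      then have "S (i, j) \<le> a + b" using SYT_val[OF S] by fastforce
      then show ?thesis using True by auto
    next
      case False
      then have "(i, j) \<noteq> ?c" using h by (auto simp: yd2)
      then have "(i, j) \<in> young_diagram [a, b] \<and> (i, j + 1) \<in> young_diagram [a, b]"
        using h False by (auto simp: yd_row1)
      then show ?thesis using S False \<open>(i, j) \<noteq> ?c\<close> unfolding SYT2 by auto
    qed
  next
    fix i j assume h: "(i, j) \<in> young_diagram [Suc a, b] \<and> (i + 1, j) \<in> young_diagram [Suc a, b]"
    then have n1: "(i, j) \<noteq> ?c" "(i + 1, j) \<noteq> ?c" using ba by (auto simp: yd2)
    then have "(i, j) \<in> young_diagram [a, b] \<and> (i + 1, j) \<in> young_diagram [a, b]"
      using h by (auto simp: yd_row1)
    then show "(S(?c := Suc (a + b))) (i, j) < (S(?c := Suc (a + b))) (i + 1, j)"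
      using S n1 unfolding SYT2 by auto
  qed
qed

lemma E2: assumes S: "S \<in> SYT [a, b]" and ba: "b < a"
  shows "S((2, Suc b) := Suc (a + b)) \<in> SYT [a, Suc b]"
proof -
  let ?c = "(2::nat, Suc b)"
  have cn: "?c \<notin> young_diagram [a, b]" by (simp add: yd2)
  have bij: "bij_betw S (young_diagram [a, b]) {1..a+b}" using S by (simp add: SYT2)
  have B: "bij_betw (S(?c := Suc (a + b))) (young_diagram [a, Suc b]) {1..a + Suc b}"
    using bij_ext[OF bij cn] by (simp add: yd_row2)
  show ?thesis unfolding SYT2
  proof (intro conjI allI impI)
    show "bij_betw (S(?c := Suc (a + b))) (young_diagram [a, Suc b]) {1..a + Suc b}" by (rule B)
  next
    fix c assume "c \<notin> young_diagram [a, Suc b]"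
    then show "(S(?c := Suc (a + b))) c = 0" using SYT_zero[OF S, of c] by (auto simp: yd_row2)
  next
    fix i j assume h: "(i, j) \<in> young_diagram [a, Suc b] \<and> (i, j + 1) \<in> young_diagram [a, Suc b]"
    show "(S(?c := Suc (a + b))) (i, j) < (S(?c := Suc (a + b))) (i, j + 1)"
    proof (cases "(i, j + 1) = ?c")
      case True
      then have "(i, j) \<in> young_diagram [a, b]" using h by (auto simp: yd2)
      then have "S (i, j) \<le> a + b" using SYT_val[OF S] by fastforce
      then show ?thesis using True by auto
    next
      case False
      then have "(i, j) \<noteq> ?c" using h by (auto simp: yd2)
      then have "(i, j) \<in> young_diagram [a, b] \<and> (i, j + 1) \<in> young_diagram [a, b]"
        using h False by (auto simp: yd_row2)
      then show ?thesis using S False \<open>(i, j) \<noteq> ?c\<close> unfolding SYT2 by auto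
    qed
  next
    fix i j assume h: "(i, j) \<in> young_diagram [a, Suc b] \<and> (i + 1, j) \<in> young_diagram [a, Suc b]"
    show "(S(?c := Suc (a + b))) (i, j) < (S(?c := Suc (a + b))) (i + 1, j)"
    proof (cases "(i + 1, j) = ?c")
      case True
      then have "(i, j) \<in> young_diagram [a, b]" using h ba by (auto simp: yd2)
      then have "S (i, j) \<le> a + b" using SYT_val[OF S] by fastforce
      then show ?thesis using True by auto
    next
      case False
      then have "(i, j) \<noteq> ?c" using h by (auto simp: yd2)
      then have "(i, j) \<in> young_diagram [a, b] \<and> (i + 1, j) \<in> young_diagram [a, b]"
        using h False by (auto simp: yd_row2)
      then show ?thesis using S False \<open>(i, j) \<noteq> ?c\<close> unfolding SYT2 by auto
    qed
  qed
qed


lemma R1: assumes T: "T \<in> SYT [Suc a, b]" and ba: "b \<le> a" and v: "T (1, Suc a) = Suc (a + b)"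
  shows "T((1, Suc a) := 0) \<in> SYT [a, b]"
proof -
  let ?c = "(1::nat, Suc a)"
  have bij: "bij_betw T (young_diagram [Suc a, b]) {1..Suc (a+b)}" using T by (simp add: SYT2)
  have cin: "?c \<in> young_diagram [Suc a, b]" by (simp add: yd2)
  have eq: "young_diagram [Suc a, b] - {?c} = young_diagram [a, b]" by (auto simp: yd2)
  have B: "bij_betw (T(?c := 0)) (young_diagram [a, b]) {1..a+b}"
    using bij_restr[OF bij cin v] eq by simp
  show ?thesis unfolding SYT2
  proof (intro conjI allI impI)
    show "bij_betw (T(?c := 0)) (young_diagram [a, b]) {1..a+b}" by (rule B)
  next
    fix c assume "c \<notin> young_diagram [a, b]"
    then show "(T(?c := 0)) c = 0" using SYT_zero[OF T, of c] by (auto simp: yd_row1)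
  next
    fix i j assume h: "(i, j) \<in> young_diagram [a, b] \<and> (i, j + 1) \<in> young_diagram [a, b]"
    then have "(i, j) \<noteq> ?c" "(i, j+1) \<noteq> ?c" by (auto simp: yd2)
    moreover have "(i, j) \<in> young_diagram [Suc a, b] \<and> (i, j + 1) \<in> young_diagram [Suc a, b]"
      using h by (auto simp: yd_row1)
    ultimately show "(T(?c := 0)) (i, j) < (T(?c := 0)) (i, j + 1)" using T unfolding SYT2 by auto
  next
    fix i j assume h: "(i, j) \<in> young_diagram [a, b] \<and> (i + 1, j) \<in> young_diagram [a, b]"
    then have "(i, j) \<noteq> ?c" "(i+1, j) \<noteq> ?c" by (auto simp: yd2)
    moreover have "(i, j) \<in> young_diagram [Suc a, b] \<and> (i + 1, j) \<in> young_diagram [Suc a, b]"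
      using h by (auto simp: yd_row1)
    ultimately show "(T(?c := 0)) (i, j) < (T(?c := 0)) (i + 1, j)" using T unfolding SYT2 by auto
  qed
qed

lemma R2: assumes T: "T \<in> SYT [a, Suc b]" and v: "T (2, Suc b) = Suc (a + b)"
  shows "T((2, Suc b) := 0) \<in> SYT [a, b]"
proof -
  let ?c = "(2::nat, Suc b)"
  have bij: "bij_betw T (young_diagram [a, Suc b]) {1..Suc (a+b)}" using T by (simp add: SYT2)
  have cin: "?c \<in> young_diagram [a, Suc b]" by (simp add: yd2)
  have eq: "young_diagram [a, Suc b] - {?c} = young_diagram [a, b]" by (auto simp: yd2)
  have B: "bij_betw (T(?c := 0)) (young_diagram [a, b]) {1..a+b}"
    using bij_restr[OF bij cin v] eq by simp
  show ?thesis unfolding SYT2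
  proof (intro conjI allI impI)
    show "bij_betw (T(?c := 0)) (young_diagram [a, b]) {1..a+b}" by (rule B)
  next
    fix c assume "c \<notin> young_diagram [a, b]"
    then show "(T(?c := 0)) c = 0" using SYT_zero[OF T, of c] by (auto simp: yd_row2)
  next
    fix i j assume h: "(i, j) \<in> young_diagram [a, b] \<and> (i, j + 1) \<in> young_diagram [a, b]"
    then have "(i, j) \<noteq> ?c" "(i, j+1) \<noteq> ?c" by (auto simp: yd2)
    moreover have "(i, j) \<in> young_diagram [a, Suc b] \<and> (i, j + 1) \<in> young_diagram [a, Suc b]"
      using h by (auto simp: yd_row2)
    ultimately show "(T(?c := 0)) (i, j) < (T(?c := 0)) (i, j + 1)" using T unfolding SYT2 by auto
  next
    fix i j assume h: "(i, j) \<in> young_diagram [a, b] \<and> (i + 1, j) \<in> young_diagram [a, b]"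
    then have "(i, j) \<noteq> ?c" "(i+1, j) \<noteq> ?c" by (auto simp: yd2)
    moreover have "(i, j) \<in> young_diagram [a, Suc b] \<and> (i + 1, j) \<in> young_diagram [a, Suc b]"
      using h by (auto simp: yd_row2)
    ultimately show "(T(?c := 0)) (i, j) < (T(?c := 0)) (i + 1, j)" using T unfolding SYT2 by auto
  qed
qed

lemma cardX1:
  assumes ba: "b \<le> a" and P: "\<forall>T c. P (T(c := Suc (a+b))) = P (T(c := 0))"
  shows "card {T \<in> SYT [Suc a, b]. P T \<and> T (1, Suc a) = Suc (a + b)} = card {T \<in> SYT [a, b]. P T}"
proof -
  let ?c = "(1::nat, Suc a)" let ?N = "Suc (a + b)"
  let ?Y = "{T \<in> SYT [a, b]. P T}"
  have z: "S ?c = 0" if "S \<in> SYT [a, b]" for S using SYT_zero[OF that] by (simp add: yd2)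
  have "{T \<in> SYT [Suc a, b]. P T \<and> T ?c = ?N} = (\<lambda>S. S(?c := ?N)) ` ?Y"
  proof (intro equalityI subsetI)
    fix T assume h: "T \<in> {T \<in> SYT [Suc a, b]. P T \<and> T ?c = ?N}"
    then have "T = (T(?c := 0))(?c := ?N)" by auto
    moreover have "T(?c := 0) \<in> ?Y"
      using R1[of T a b] h ba P by (metis (mono_tags, lifting) fun_upd_triv mem_Collect_eq)
    ultimately show "T \<in> (\<lambda>S. S(?c := ?N)) ` ?Y" by blast
  next
    fix T assume "T \<in> (\<lambda>S. S(?c := ?N)) ` ?Y"
    then obtain S where S: "S \<in> ?Y" "T = S(?c := ?N)" by blast
    have "P T" using S P z[of S] by (metis (mono_tags, lifting) fun_upd_triv mem_Collect_eq)
    then show "T \<in> {T \<in> SYT [Suc a, b]. P T \<and> T ?c = ?N}" using E1[of S a b] S ba by auto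
  qed
  moreover have "inj_on (\<lambda>S. S(?c := ?N)) ?Y"
  proof (rule inj_onI)
    fix S1 S2 assume h: "S1 \<in> ?Y" "S2 \<in> ?Y" "S1(?c := ?N) = S2(?c := ?N)"
    then have "(S1(?c := ?N))(?c := 0) = (S2(?c := ?N))(?c := 0)" by simp
    then show "S1 = S2" using z[of S1] z[of S2] h(1,2) by (metis (mono_tags, lifting) fun_upd_triv fun_upd_upd mem_Collect_eq)
  qed
  ultimately show ?thesis by (simp add: card_image)
qed

lemma cardX2:
  assumes ba: "b < a" and P: "\<forall>T c. P (T(c := Suc (a+b))) = P (T(c := 0))"
  shows "card {T \<in> SYT [a, Suc b]. P T \<and> T (2, Suc b) = Suc (a + b)} = card {T \<in> SYT [a, b]. P T}"
proof -
  let ?c = "(2::nat, Suc b)" let ?N = "Suc (a + b)"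
  let ?Y = "{T \<in> SYT [a, b]. P T}"
  have z: "S ?c = 0" if "S \<in> SYT [a, b]" for S using SYT_zero[OF that] by (simp add: yd2)
  have "{T \<in> SYT [a, Suc b]. P T \<and> T ?c = ?N} = (\<lambda>S. S(?c := ?N)) ` ?Y"
  proof (intro equalityI subsetI)
    fix T assume h: "T \<in> {T \<in> SYT [a, Suc b]. P T \<and> T ?c = ?N}"
    then have "T = (T(?c := 0))(?c := ?N)" by auto
    moreover have "T(?c := 0) \<in> ?Y"
      using R2[of T a b] h P by (metis (mono_tags, lifting) fun_upd_triv mem_Collect_eq)
    ultimately show "T \<in> (\<lambda>S. S(?c := ?N)) ` ?Y" by blast
  next
    fix T assume "T \<in> (\<lambda>S. S(?c := ?N)) ` ?Y"
    then obtain S where S: "S \<in> ?Y" "T = S(?c := ?N)" by blast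
    have "P T" using S P z[of S] by (metis (mono_tags, lifting) fun_upd_triv mem_Collect_eq)
    then show "T \<in> {T \<in> SYT [a, Suc b]. P T \<and> T ?c = ?N}" using E2[of S a b] S ba by auto
  qed
  moreover have "inj_on (\<lambda>S. S(?c := ?N)) ?Y"
  proof (rule inj_onI)
    fix S1 S2 assume h: "S1 \<in> ?Y" "S2 \<in> ?Y" "S1(?c := ?N) = S2(?c := ?N)"
    then have "(S1(?c := ?N))(?c := 0) = (S2(?c := ?N))(?c := 0)" by simp
    then show "S1 = S2" using z[of S1] z[of S2] h(1,2) by (metis (mono_tags, lifting) fun_upd_triv fun_upd_upd mem_Collect_eq)
  qed
  ultimately show ?thesis by (simp add: card_image)
qed


lemma rec:
  assumes ba: "b \<le> a" and N: "1 \<le> a + b" and P: "\<forall>T c. P (T(c := a+b)) = P (T(c := 0))"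
  shows "card {T \<in> SYT [a, b]. P T} = (if b < a then card {T \<in> SYT [a - 1, b]. P T} else 0)
           + (if 1 \<le> b then card {T \<in> SYT [a, b - 1]. P T} else 0)"
proof -
  let ?X1 = "{T \<in> SYT [a, b]. P T \<and> b < a \<and> T (1, a) = a + b}"
  let ?X2 = "{T \<in> SYT [a, b]. P T \<and> 1 \<le> b \<and> T (2, b) = a + b}"
  have U: "{T \<in> SYT [a, b]. P T} = ?X1 \<union> ?X2" using SYT_corner[OF _ ba N] by blast
  have D: "?X1 \<inter> ?X2 = {}"
  proof (rule ccontr)
    assume "?X1 \<inter> ?X2 \<noteq> {}"
    then obtain T where T: "T \<in> SYT [a, b]" "b < a" "1 \<le> b" "T (1, a) = a + b" "T (2, b) = a + b" by blast
    then have "inj_on T (young_diagram [a, b])" by (simp add: SYT2 bij_betw_def)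
    moreover have "(1, a) \<in> young_diagram [a, b]" "(2, b) \<in> young_diagram [a, b]" using T by (auto simp: yd2)
    ultimately show False using T by (metis inj_on_contraD old.prod.inject numeral_eq_one_iff semiring_norm(85))
  qed
  have F1: "finite ?X1" "finite ?X2" using SYT_fin by auto
  have C1: "card ?X1 = (if b < a then card {T \<in> SYT [a - 1, b]. P T} else 0)"
  proof (cases "b < a")
    case True
    then obtain a' where a': "a = Suc a'" "b \<le> a'" by (metis Suc_le_eq lessE less_or_eq_imp_le)
    have "?X1 = {T \<in> SYT [Suc a', b]. P T \<and> T (1, Suc a') = Suc (a' + b)}" using True a' by auto
    then show ?thesis using cardX1[OF a'(2), of P] P True a' by simp
  qed simp
  have C2: "card ?X2 = (if 1 \<le> b then card {T \<in> SYT [a, b - 1]. P T} else 0)"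
  proof (cases "1 \<le> b")
    case True
    then obtain b' where b': "b = Suc b'" "b' < a" using ba by (cases b) auto
    have "?X2 = {T \<in> SYT [a, Suc b']. P T \<and> T (2, Suc b') = Suc (a + b')}" using True b' by auto
    then show ?thesis using cardX2[OF b'(2), of P] P True b' by simp
  qed simp
  show ?thesis using U D F1 C1 C2 by (simp add: card_Un_disjoint)
qed




definition Bi :: "nat \<Rightarrow> int \<Rightarrow> int" where
  "Bi m k = (if k < 0 then 0 else int (m choose nat k))"

lemma Bi_pascal: "Bi (Suc m) k = Bi m k + Bi m (k - 1)"
proof (cases "k < 0")
  case True then show ?thesis by (simp add: Bi_def)
next
  case False
  show ?thesis
  proof (cases "k = 0")
    case True then show ?thesis by (simp add: Bi_def)
  next
    case False
    then obtain j where j: "k = int (Suc j)" using \<open>\<not> k < 0\<close> by (intro that[of "nat k - 1"]) simp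
    then have k1: "nat k = Suc j" and k2: "nat (k - 1) = j" and k3: "\<not> k < 0" and k4: "\<not> k - 1 < 0" by auto
    have "Bi (Suc m) k = int (Suc m choose Suc j)" unfolding Bi_def using k1 k3 by simp
    also have "\<dots> = int (m choose Suc j) + int (m choose j)" by simp
    also have "\<dots> = Bi m k + Bi m (k - 1)" unfolding Bi_def using k1 k2 k3 k4 by simp
    finally show ?thesis .
  qed
qed

lemma Bi_sym: "Bi m k = Bi m (int m - k)"
proof -
  consider "k < 0" | "k > int m" | "0 \<le> k \<and> k \<le> int m" by linarith
  then show ?thesis
  proof cases
    case 1 then show ?thesis by (simp add: Bi_def)
  next
    case 2 then show ?thesis by (simp add: Bi_def)
  next
    case 3
    then obtain j where j: "k = int j" "j \<le> m" by (metis nat_0_le of_nat_le_iff nat_le_iff)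
    then have "int m - k = int (m - j)" by simp
    then show ?thesis using j by (simp add: Bi_def binomial_symmetric[of j m, symmetric] del: of_nat_diff)
  qed
qed

definition Gc :: "nat \<Rightarrow> nat \<Rightarrow> int" where
  "Gc a b = Bi (a + b) (int b) - Bi (a + b) (int b - 1)"

definition Qc :: "nat \<Rightarrow> nat \<Rightarrow> int" where
  "Qc a b = Bi (a + b - 3) (int b) - Bi (a + b - 3) (int b - 4)"

lemma Gc_rec: assumes "b \<le> a" "1 \<le> a + b"
  shows "Gc a b = (if b < a then Gc (a - 1) b else 0) + (if 1 \<le> b then Gc a (b - 1) else 0)"
proof -
  obtain m where m: "a + b = Suc m" using assms by (intro that[of "a + b - 1"]) simp
  have e: "Gc a b = (Bi m (int b) - Bi m (int b - 1)) + (Bi m (int b - 1) - Bi m (int b - 2))"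
    unfolding Gc_def m Bi_pascal by (simp add: algebra_simps)
  have t1: "(if b < a then Gc (a - 1) b else 0) = Bi m (int b) - Bi m (int b - 1)"
  proof (cases "b < a")
    case True
    then have "a - 1 + b = m" using m by simp
    then show ?thesis using True by (simp add: Gc_def)
  next
    case False
    then have "int m - int b = int b - 1" using m assms by simp
    then show ?thesis using False Bi_sym[of m "int b"] by simp
  qed
  have t2: "(if 1 \<le> b then Gc a (b - 1) else 0) = Bi m (int b - 1) - Bi m (int b - 2)"
  proof (cases "1 \<le> b")
    case True
    then have "a + (b - 1) = m" using m by simp
    then show ?thesis using True by (simp add: Gc_def of_nat_diff algebra_simps)
  next
    case False
    then show ?thesis by (simp add: Bi_def)
  qed
  show ?thesis using e t1 t2 by simp
qed

lemma Qc_rec: assumes "b \<le> a" "4 \<le> a + b"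
  shows "Qc a b = (if b < a then Qc (a - 1) b else 0) + (if 1 \<le> b then Qc a (b - 1) else 0)"
proof -
  obtain m where m: "a + b - 3 = Suc m" using assms by (intro that[of "a + b - 4"]) simp
  have e: "Qc a b = (Bi m (int b) - Bi m (int b - 4)) + (Bi m (int b - 1) - Bi m (int b - 5))"
    unfolding Qc_def m Bi_pascal by (simp add: algebra_simps)
  have t1: "(if b < a then Qc (a - 1) b else 0) = Bi m (int b) - Bi m (int b - 4)"
  proof (cases "b < a")
    case True
    then have "a - 1 + b - 3 = m" using m by simp
    then show ?thesis using True by (simp add: Qc_def)
  next
    case False
    then have "int m - int b = int b - 4" using m assms by simp
    then show ?thesis using False Bi_sym[of m "int b"] by simp
  qed
  have t2: "(if 1 \<le> b then Qc a (b - 1) else 0) = Bi m (int b - 1) - Bi m (int b - 5)"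
  proof (cases "1 \<le> b")
    case True
    then have "a + (b - 1) - 3 = m" using m by simp
    then show ?thesis using True by (simp add: Qc_def of_nat_diff algebra_simps)
  next
    case False
    then show ?thesis by (simp add: Bi_def)
  qed
  show ?thesis using e t1 t2 by simp
qed



lemma SYT00: "SYT [0, 0] = {\<lambda>c. 0}"
proof -
  have yd: "young_diagram [0, 0] = {}" by (auto simp: yd2)
  show ?thesis unfolding SYT_def yd by (auto simp: bij_betw_def)
qed

lemma g_closed: "b \<le> a \<Longrightarrow> int (card (SYT [a, b])) = Gc a b"
proof (induction "a + b" arbitrary: a b rule: less_induct)
  case less
  show ?case
  proof (cases "a + b = 0")
    case True
    then have "a = 0" "b = 0" by auto
    then show ?thesis by (simp add: SYT00 Gc_def Bi_def)
  next
    case False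
    then have N: "1 \<le> a + b" by linarith
    have r: "card (SYT [a, b]) = (if b < a then card (SYT [a - 1, b]) else 0)
           + (if 1 \<le> b then card (SYT [a, b - 1]) else 0)"
      using rec[OF less.prems N, of "\<lambda>_. True"] by simp
    have i1: "b < a \<Longrightarrow> int (card (SYT [a - 1, b])) = Gc (a - 1) b"
      by (rule less.hyps) auto
    have i2: "1 \<le> b \<Longrightarrow> int (card (SYT [a, b - 1])) = Gc a (b - 1)"
      using less.prems by (intro less.hyps) auto
    show ?thesis using r i1 i2 Gc_rec[OF less.prems N] by (auto split: if_splits)
  qed
qed

lemma row_mono: assumes T: "T \<in> SYT lam" and "(i, k) \<in> young_diagram lam" and "j < k" and "1 \<le> j"
  and yd: "\<And>l. 1 \<le> l \<Longrightarrow> l \<le> k \<Longrightarrow> (i, l) \<in> young_diagram lam"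
  shows "T (i, j) < T (i, k)"
  using assms(3,4) yd
proof (induction k)
  case 0 then show ?case by simp
next
  case (Suc k)
  have s: "T (i, k) < T (i, Suc k)"
    using T Suc.prems(1,2) Suc.prems(3)[of k] Suc.prems(3)[of "Suc k"] unfolding SYT_def by auto
  show ?case
  proof (cases "j = k")
    case True then show ?thesis using s by simp
  next
    case False
    then have "T (i, j) < T (i, k)" using Suc by auto
    then show ?thesis using s by simp
  qed
qed

lemma q_base: "card {T \<in> SYT [3, 0]. T (1, 3) = 3} = 1"
proof -
  have "{T \<in> SYT [3, 0]. T (1, 3) = 3} = SYT [3, 0]"
  proof (intro equalityI subsetI)
    fix T assume T: "T \<in> SYT [3, 0]"
    have yd: "\<And>l. 1 \<le> l \<Longrightarrow> l \<le> 3 \<Longrightarrow> (1, l) \<in> young_diagram [3, 0]" by (simp add: yd2)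
    have "T (1, 1) < T (1, 2)" "T (1, 2) < T (1, 3)"
      using row_mono[OF T, of 1 3] row_mono[OF T, of 1 2] yd by auto
    moreover have "T (1, 1) \<ge> 1" "T (1, 3) \<le> 3" using SYT_val[OF T, of "(1,1)"] SYT_val[OF T, of "(1,3)"] by (auto simp: yd2)
    ultimately show "T \<in> {T \<in> SYT [3, 0]. T (1, 3) = 3}" using T by auto
  qed auto
  moreover have "int (card (SYT [3, 0])) = 1" using g_closed[of 0 3] by (simp add: Gc_def Bi_def)
  ultimately show ?thesis by simp
qed

lemma q_closed: "b \<le> a \<Longrightarrow> 3 \<le> a + b \<Longrightarrow> int (card {T \<in> SYT [a, b]. T (1, 3) = 3}) = Qc a b"
proof (induction "a + b" arbitrary: a b rule: less_induct)
  case less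
  show ?case
  proof (cases "a \<le> 2")
    case True
    have nin: "(1, 3) \<notin> young_diagram [a, b]" using True by (simp add: yd2)
    have E: "{T \<in> SYT [a, b]. T (1, 3) = 3} = {}"
    proof -
      have "\<forall>T\<in>SYT [a, b]. T (1, 3) = 0" using SYT_zero[OF _ nin] by blast
      then show ?thesis by auto
    qed
    moreover have "(a = 2 \<and> b = 1) \<or> (a = 2 \<and> b = 2)" using True less.prems by auto
    then have "Qc a b = 0" by (auto simp: Qc_def Bi_def)
    then show ?thesis unfolding E by simp
  next
    case False
    show ?thesis
    proof (cases "a + b = 3")
      case True
      then have "a = 3" "b = 0" using False by auto
      then show ?thesis using q_base by (simp add: Qc_def Bi_def)
    next
      case False2: False
      then have N: "1 \<le> a + b" "4 \<le> a + b" using less.prems by auto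
      have P: "\<forall>T c. ((T(c := a + b)) (1, 3) = 3) = ((T(c := 0)) (1, 3) = 3)" using N by auto
      have r: "card {T \<in> SYT [a, b]. T (1, 3) = 3} = (if b < a then card {T \<in> SYT [a - 1, b]. T (1, 3) = 3} else 0)
           + (if 1 \<le> b then card {T \<in> SYT [a, b - 1]. T (1, 3) = 3} else 0)"
        using rec[OF less.prems(1) N(1) P] by simp
      have i1: "b < a \<Longrightarrow> int (card {T \<in> SYT [a - 1, b]. T (1, 3) = 3}) = Qc (a - 1) b"
        using N by (intro less.hyps) auto
      have i2: "1 \<le> b \<Longrightarrow> int (card {T \<in> SYT [a, b - 1]. T (1, 3) = 3}) = Qc a (b - 1)"
        using less.prems N by (intro less.hyps) auto
      show ?thesis using r i1 i2 Qc_rec[OF less.prems(1) N(2)] by (auto split: if_splits)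
    qed
  qed
qed



lemma aux1: fixes x y F3 F6 A C m :: real
  assumes h6: "F6 = (2*m+6)*(2*m+5)*(2*m+4)*x" and h3: "F3 = (m+3)*(m+2)*(m+1)*y"
    and hA: "F3*y*A = x" and hC: "F3*F3*C = F6" and p: "F3 > 0"
  shows "C*(m+1) = 4*A*(2*m+5)"
proof -
  have "F3*F3*(C*(m+1)) = (F3*F3*C)*(m+1)" by (simp add: algebra_simps)
  also have "\<dots> = F6*(m+1)" using hC by simp
  also have "\<dots> = (2*m+6)*(2*m+5)*(2*m+4)*(m+1)*x" using h6 by (simp add: algebra_simps)
  also have "\<dots> = (2*m+6)*(2*m+5)*(2*m+4)*(m+1)*(F3*y*A)" using hA by simp
  also have "\<dots> = F3 * ((m+3)*(m+2)*(m+1)*y) * (4*A*(2*m+5))" by (simp add: algebra_simps)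
  also have "\<dots> = F3*F3*(4*A*(2*m+5))" using h3 by simp
  finally show ?thesis using p by simp
qed
lemma aux2: fixes F3 F2 F4 F6 C D m :: real
  assumes "F3 = (m+3)*F2" "F4 = (m+4)*F3" "F3*F3*C = F6" "F2*F4*D = F6" "F2 > 0" "F3 > 0" "m \<ge> 0"
  shows "D*(m+4) = C*(m+3)"
proof -
  have "F2*F3*(D*(m+4)) = F2*((m+4)*F3)*D" by (simp add: algebra_simps)
  also have "\<dots> = F2*F4*D" using assms by simp
  also have "\<dots> = F3*F3*C" using assms by simp
  also have "\<dots> = (m+3)*F2*F3*C" using assms(1) by simp
  also have "\<dots> = F2*F3*(C*(m+3))" by (simp add: algebra_simps)
  finally show ?thesis using assms by simp
qed
lemma aux3: fixes a b B A k F :: real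
  assumes "a*((k+5)*b)*B = F" "b*((k+1)*a)*A = F" "a>0" "b>0"
  shows "B*(k+5) = A*(k+1)"
proof -
  have "a*b*(B*(k+5)) = a*((k+5)*b)*B" by (simp add: algebra_simps)
  also have "\<dots> = b*((k+1)*a)*A" using assms by simp
  also have "\<dots> = a*b*(A*(k+1))" by (simp add: algebra_simps)
  finally show ?thesis using assms by simp
qed

lemma bf: "k \<le> n \<Longrightarrow> fact k * fact (n - k) * real (n choose k) = (fact n :: real)"
  by (simp add: binomial_fact)

lemma alg_rel:
  fixes m :: nat
  shows "real (2*m+6 choose (m+3)) * (real m+1) = 4 * real (2*m+3 choose (m+3)) * (2*real m+5)"
    and "real (2*m+6 choose (m+2)) * (real m+4) = real (2*m+6 choose (m+3)) * (real m+3)"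
proof -
  have f1: "fact (2*m+6) = (2*real m+6)*(2*real m+5)*(2*real m+4) * (fact (2*m+3) :: real)"
    by (simp add: fact_Suc numeral_eq_Suc algebra_simps del: fact_Suc_0)
  have f2: "fact (m+3) = (real m+3)*(real m+2)*(real m+1) * (fact m :: real)"
    by (simp add: fact_Suc numeral_eq_Suc algebra_simps)
  have f3: "fact (m+4) = (real m+4) * (fact (m+3) :: real)"
    by (simp add: fact_Suc numeral_eq_Suc algebra_simps)
  have f4: "fact (m+3) = (real m+3) * (fact (m+2) :: real)"
    by (simp add: fact_Suc numeral_eq_Suc algebra_simps)
  have hA: "fact (m+3) * fact m * real (2*m+3 choose (m+3)) = (fact (2*m+3) :: real)"
  proof -
    have e: "2*m+3 - (m+3) = m" by simp
    have le: "m+3 \<le> 2*m+3" by simp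
    show ?thesis using bf[OF le, unfolded e] .
  qed
  have hC: "fact (m+3) * fact (m+3) * real (2*m+6 choose (m+3)) = (fact (2*m+6) :: real)"
  proof -
    have e: "2*m+6 - (m+3) = m+3" by simp
    have le: "m+3 \<le> 2*m+6" by simp
    show ?thesis using bf[OF le, unfolded e] .
  qed
  have hD: "fact (m+2) * fact (m+4) * real (2*m+6 choose (m+2)) = (fact (2*m+6) :: real)"
  proof -
    have e: "2*m+6 - (m+2) = m+4" by simp
    have le: "m+2 \<le> 2*m+6" by simp
    show ?thesis using bf[OF le, unfolded e] .
  qed
  show "real (2*m+6 choose (m+3)) * (real m+1) = 4 * real (2*m+3 choose (m+3)) * (2*real m+5)"
    by (rule aux1[OF f1 f2 hA hC]) simp
  show "real (2*m+6 choose (m+2)) * (real m+4) = real (2*m+6 choose (m+3)) * (real m+3)"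
    by (rule aux2[OF f4 f3 hC hD]) simp_all
qed

lemma alg_relB:
  fixes m :: nat
  shows "real (if m = 0 then 0 else (2*m+3 choose (m-1))) * (real m+4) = real (2*m+3 choose (m+3)) * real m"
proof (cases m)
  case 0 then show ?thesis by simp
next
  case (Suc k)
  have f3: "fact (k+5) = (k+5) * (fact (k+4) :: real)"
    by (simp add: fact_Suc numeral_eq_Suc algebra_simps)
  have f4: "fact (k+1) = (k+1) * (fact k :: real)"
    by (simp add: fact_Suc algebra_simps)
  have hB: "fact k * fact (k+5) * real (2*k+5 choose k) = (fact (2*k+5) :: real)"
  proof -
    have e: "2*k+5 - k = k+5" by simp
    have le: "k \<le> 2*k+5" by simp
    show ?thesis using bf[OF le, unfolded e] .
  qed
  have hA: "fact (k+4) * fact (k+1) * real (2*k+5 choose (k+4)) = (fact (2*k+5) :: real)"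
  proof -
    have e: "2*k+5 - (k+4) = k+1" by simp
    have le: "k+4 \<le> 2*k+5" by simp
    show ?thesis using bf[OF le, unfolded e] .
  qed
  have r: "real (2*k+5 choose k) * (k+5) = real (2*k+5 choose (k+4)) * (k+1)"
    using aux3[of "fact k" "real k" "fact (k+4)" "real (2*k+5 choose k)" "fact (2*k+5)" "real (2*k+5 choose (k+4))"]
      hB hA f3 f4 by (simp add: algebra_simps)
  have e1: "2*m+3 = 2*k+5" "m - 1 = k" "m + 3 = k + 4" using Suc by auto
  show ?thesis unfolding e1 using Suc r by (simp add: algebra_simps)
qed



lemma key:
  assumes n: "3 \<le> n" and T: "T \<in> SYT [n, n]"
  shows "T (2, 1) > T (1, 3) \<longleftrightarrow> T (1, 3) = 3" and "T (1, 3) \<noteq> T (2, 1)"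
proof -
  let ?D = "young_diagram [n, n]"
  have yd: "\<And>i l. (i = 1 \<or> i = 2) \<Longrightarrow> 1 \<le> l \<Longrightarrow> l \<le> n \<Longrightarrow> (i, l) \<in> ?D" by (auto simp: yd2)
  have inj: "inj_on T ?D" and img: "T ` ?D = {1..n+n}" using T by (auto simp: SYT2 bij_betw_def)
  have c12: "T (1, 1) < T (1, 2)" using row_mono[OF T, of 1 2 1] yd n by auto
  have c23: "T (1, 2) < T (1, 3)" using row_mono[OF T, of 1 3 2] yd n by auto
  have v11: "T (1, 1) \<ge> 1" using SYT_val[OF T, of "(1,1)"] yd n by auto
  have d1: "(1::nat, 3::nat) \<in> ?D" "(2::nat, 1::nat) \<in> ?D" "(1::nat, 1::nat) \<in> ?D" "(1::nat, 2::nat) \<in> ?D"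
    using yd n by auto
  show ne: "T (1, 3) \<noteq> T (2, 1)" using inj_onD[OF inj _ d1(1) d1(2)] by auto
  show "T (2, 1) > T (1, 3) \<longleftrightarrow> T (1, 3) = 3"
  proof
    assume h: "T (2, 1) > T (1, 3)"
    let ?v = "T (1, 3)"
    let ?S3 = "{(1::nat, 1::nat), (1, 2), (1, 3)}"
    have "{1..?v} \<subseteq> T ` ?S3"
    proof
      fix w assume w: "w \<in> {1..?v}"
      have "?v \<le> n + n" using SYT_val[OF T d1(1)] by simp
      then have "w \<in> T ` ?D" using w img by auto
      then obtain i j where c: "(i, j) \<in> ?D" "T (i, j) = w" by auto
      have "(i, j) \<in> ?S3"
      proof (rule ccontr)
        assume nS: "(i, j) \<notin> ?S3"
        from c(1) have "(i = 1 \<and> 1 \<le> j \<and> j \<le> n) \<or> (i = 2 \<and> 1 \<le> j \<and> j \<le> n)" by (simp add: yd2)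
        then show False
        proof
          assume a: "i = 1 \<and> 1 \<le> j \<and> j \<le> n"
          then have "3 < j" using nS by auto
          then have "T (1, 3) < T (1, j)" using row_mono[OF T, of 1 j 3] yd a by auto
          then show False using c a w by auto
        next
          assume a: "i = 2 \<and> 1 \<le> j \<and> j \<le> n"
          have "T (2, 1) \<le> T (2, j)"
          proof (cases "j = 1")
            case False
            then show ?thesis using row_mono[OF T, of 2 j 1] yd a by fastforce
          qed simp
          then show False using c a w h by auto
        qed
      qed
      then show "w \<in> T ` ?S3" using c by blast
    qed
    then have "card {1..?v} \<le> card (T ` ?S3)" by (intro card_mono) auto
    also have "\<dots> \<le> card ?S3" by (rule card_image_le) simp
    also have "\<dots> \<le> 3" by (simp add: card_insert_le_m1)
    finally have "?v \<le> 3" by simp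
    then show "?v = 3" using c12 c23 v11 by linarith
  next
    assume h: "T (1, 3) = 3"
    then have "T (1, 1) = 1" "T (1, 2) = 2" using c12 c23 v11 by linarith+
    moreover have "T (2, 1) \<noteq> T (1, 1)" "T (2, 1) \<noteq> T (1, 2)"
      using inj_onD[OF inj _ d1(2) d1(3)] inj_onD[OF inj _ d1(2) d1(4)] by auto
    moreover have "T (2, 1) \<ge> 1" using SYT_val[OF T d1(2)] by simp
    ultimately show "T (2, 1) > T (1, 3)" using h ne by linarith
  qed
qed


lemma aux4: fixes A B C D cs cv m :: real
  assumes "m \<ge> 0" "A > 0" "cs = C - D" "cv = A - B" "C*(m+1) = 4*A*(2*m+5)" "D*(m+4) = C*(m+3)"
    "B*(m+4) = A*m"
  shows "(cs - 2*cv)/cs = 3/(2*m+5)"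
proof -
  have "cs*(m+4) = C*(m+4) - D*(m+4)" unfolding assms(3) by (simp add: algebra_simps)
  also have "\<dots> = C" using assms(6) by (simp add: algebra_simps)
  finally have h1: "cs*(m+4) = C" .
  have "cv*(m+4) = A*(m+4) - B*(m+4)" unfolding assms(4) by (simp add: algebra_simps)
  also have "\<dots> = 4*A" using assms(7) by (simp add: algebra_simps)
  finally have h2: "cv*(m+4) = 4*A" .
  have h3: "cs*(m+4)*(m+1) = 4*A*(2*m+5)" using h1 assms(5) by simp
  have cs0: "cs > 0"
  proof -
    have "4*A*(2*m+5) > 0" using assms by simp
    then have "cs*((m+4)*(m+1)) > 0" using h3 by (simp add: algebra_simps)
    moreover have "(m+4)*(m+1) > 0" using assms by simp
    ultimately show ?thesis by (simp add: zero_less_mult_iff)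
  qed
  have "(cs - 2*cv)*(2*m+5)*((m+4)*(m+1)) = 3*cs*((m+4)*(m+1))"
  proof -
    have "(cs - 2*cv)*(2*m+5)*((m+4)*(m+1)) = (cs*(m+4)*(m+1) - 2*(cv*(m+4))*(m+1))*(2*m+5)"
      by (simp add: algebra_simps)
    also have "\<dots> = (4*A*(2*m+5) - 2*(4*A)*(m+1))*(2*m+5)" using h2 h3 by simp
    also have "\<dots> = 3*(4*A*(2*m+5))" by (simp add: algebra_simps)
    also have "\<dots> = 3*cs*((m+4)*(m+1))" using h3 by (simp add: algebra_simps)
    finally show ?thesis .
  qed
  then have "(cs - 2*cv)*(2*m+5) = 3*cs" using assms(1) by simp
  then show ?thesis using cs0 assms(1) by (simp add: field_simps)
qed

lemma SP_val: assumes n: "3 \<le> n" shows "SP [n, n] (1, 3) (2, 1) = 3 / (2 * real n - 1)"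
proof -
  obtain m where m: "n = m + 3" using n by (intro that[of "n - 3"]) simp
  let ?S = "SYT [n, n]"
  let ?V = "{T \<in> ?S. T (2, 1) > T (1, 3)}"
  let ?U = "{T \<in> ?S. T (1, 3) > T (2, 1)}"
  have V: "?V = {T \<in> ?S. T (1, 3) = 3}" using key(1)[OF n] by blast
  have U: "?U = ?S - ?V"
  proof (intro equalityI subsetI)
    fix T assume "T \<in> ?U" then show "T \<in> ?S - ?V" by auto
  next
    fix T assume h: "T \<in> ?S - ?V"
    then have "T (1, 3) \<noteq> T (2, 1)" using key(2)[OF n] by blast
    with h show "T \<in> ?U" by auto
  qed
  have fin: "finite ?S" by (rule SYT_fin)
  have cU: "card ?U = card ?S - card ?V" unfolding U by (rule card_Diff_subset) (use fin in auto)
  have le: "card ?V \<le> card ?S" by (rule card_mono[OF fin]) auto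
  have gS: "int (card ?S) = Gc n n" by (rule g_closed) simp
  have gV: "int (card ?V) = Qc n n" unfolding V by (rule q_closed) (use n in auto)
  have nn: "nat (int m + 3) = m + 3" "nat (int m + 2) = m + 2" "nat (int m - 1) = m - 1" by auto
  have G: "Gc n n = int (2*m+6 choose (m+3)) - int (2*m+6 choose (m+2))"
    unfolding Gc_def Bi_def m by (simp add: nn mult_2 algebra_simps)
  have Q: "Qc n n = int (2*m+3 choose (m+3)) - int (if m = 0 then 0 else (2*m+3 choose (m-1)))"
    unfolding Qc_def Bi_def m by (auto simp: nn mult_2 algebra_simps)
  have rS: "real (card ?S) = real (2*m+6 choose (m+3)) - real (2*m+6 choose (m+2))"
    using arg_cong[OF gS[unfolded G], of real_of_int] by simp
  have rV: "real (card ?V) = real (2*m+3 choose (m+3)) - real (if m = 0 then 0 else (2*m+3 choose (m-1)))"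
    using arg_cong[OF gV[unfolded Q], of real_of_int] by (simp del: of_nat_eq_0_iff)
  have A0: "real (2*m+3 choose (m+3)) > 0" by simp
  have SPe: "SP [n, n] (1, 3) (2, 1) = (real (card ?S) - 2 * real (card ?V)) / real (card ?S)"
    unfolding SP_def cU using le by (simp add: of_nat_diff)
  have "(real (card ?S) - 2 * real (card ?V)) / real (card ?S) = 3 / (2 * real m + 5)"
    by (rule aux4[OF _ A0 rS rV alg_rel(1) alg_rel(2) alg_relB]) simp
  moreover have "2 * real n - 1 = 2 * real m + 5" using m by simp
  ultimately show ?thesis using SPe by simp
qed


lemma P2pt: fixes x :: real assumes x: "x \<ge> 1"
  shows "norm (3 / (2 * x - 1) - (3/2 * (1 / x) + 3/4 * (1 / x ^ 2) + 3/8 * (1 / x ^ 3)))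
          \<le> 3/8 * norm (1 / x ^ 4)"
proof -
  have p: "2 * x - 1 > 0" "x > 0" using x by auto
  have e: "3 / (2 * x - 1) - (3/2 * (1 / x) + 3/4 * (1 / x ^ 2) + 3/8 * (1 / x ^ 3)) = 3 / (8 * x^3 * (2*x - 1))"
    using p by (simp add: field_simps power2_eq_square power3_eq_cube power4_eq_xxxx)
  have "3 / (8 * x^3 * (2*x - 1)) \<le> 3 / (8 * x^3 * x)"
    using p x by (intro divide_left_mono mult_left_mono) auto
  also have "\<dots> = 3/8 * (1 / x^4)" by (simp add: power_def field_simps)
  finally show ?thesis unfolding e using p by simp
qed

lemma P2: "(\<lambda>n::nat. 3 / (2 * real n - 1)
          - (3/2 * (1 / real n) + 3/4 * (1 / real n ^ 2) + 3/8 * (1 / real n ^ 3)))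
        \<in> O(\<lambda>n. 1 / real n ^ 4)"
proof (rule bigoI[where c = "3/8"])
  show "\<forall>\<^sub>F n in at_top. norm (3 / (2 * real n - 1)
          - (3/2 * (1 / real n) + 3/4 * (1 / real n ^ 2) + 3/8 * (1 / real n ^ 3)))
        \<le> 3/8 * norm (1 / real n ^ 4)"
    using eventually_ge_at_top[of "1::nat"] by eventually_elim (rule P2pt, simp)
qed

lemma P3: "(\<lambda>n::nat. Min {\<bar>SP [n, n] c1 c2\<bar> | c1 c2.
            c1 \<in> young_diagram [n, n] \<and> c2 \<in> young_diagram [n, n] \<and> c1 \<noteq> c2})
        \<in> O(\<lambda>n. 1 / real n)"
proof (rule bigoI[where c = 3])
  show "\<forall>\<^sub>F n in at_top. norm (Min {\<bar>SP [n, n] c1 c2\<bar> | c1 c2.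
            c1 \<in> young_diagram [n, n] \<and> c2 \<in> young_diagram [n, n] \<and> c1 \<noteq> c2})
        \<le> 3 * norm (1 / real n)"
    using eventually_ge_at_top[of "3::nat"]
  proof eventually_elim
    case (elim n)
    let ?M = "{\<bar>SP [n, n] c1 c2\<bar> | c1 c2.
            c1 \<in> young_diagram [n, n] \<and> c2 \<in> young_diagram [n, n] \<and> c1 \<noteq> c2}"
    have "?M \<subseteq> (\<lambda>(c1, c2). \<bar>SP [n, n] c1 c2\<bar>) ` (young_diagram [n, n] \<times> young_diagram [n, n])"
      by auto
    then have fin: "finite ?M" by (rule finite_subset) (simp add: yd2_fin)
    have d: "(1::nat, 3::nat) \<in> young_diagram [n,n]" "(2::nat, 1::nat) \<in> young_diagram [n,n]"
      "(1::nat, 3::nat) \<noteq> (2, 1)" using elim by (auto simp: yd2)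
    have mem: "\<bar>SP [n, n] (1, 3) (2, 1)\<bar> \<in> ?M" using d by blast
    have ne: "?M \<noteq> {}" using mem by blast
    have "Min ?M \<le> \<bar>SP [n, n] (1, 3) (2, 1)\<bar>" by (rule Min_le[OF fin mem])
    also have "\<dots> = 3 / (2 * real n - 1)" using SP_val[OF elim] elim by simp
    also have "\<dots> \<le> 3 / real n" using elim by (intro divide_left_mono) auto
    finally have up: "Min ?M \<le> 3 / real n" .
    have "Min ?M \<in> ?M" by (rule Min_in[OF fin ne])
    then have "Min ?M \<ge> 0" by auto
    then show ?case using up elim by simp
  qed
qed

theorem mainTheorem1:
  shows "(\<forall>n::nat. n \<ge> 3 \<longrightarrow> SP [n, n] (1, 3) (2, 1) = 3 / (2 * real n - 1))
    \<and> (\<lambda>n::nat. 3 / (2 * real n - 1)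
          - (3/2 * (1 / real n) + 3/4 * (1 / real n ^ 2) + 3/8 * (1 / real n ^ 3)))
        \<in> O(\<lambda>n. 1 / real n ^ 4)
    \<and> (\<lambda>n::nat. Min {\<bar>SP [n, n] c1 c2\<bar> | c1 c2.
            c1 \<in> young_diagram [n, n] \<and> c2 \<in> young_diagram [n, n] \<and> c1 \<noteq> c2})
        \<in> O(\<lambda>n. 1 / real n)"
  using SP_val P2 P3 by blast


end
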